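(* Let $S$ be a Stone relation algebra and $\# : S\to\mathbb{N}\cup\{\infty\}$ a function. Consider the properties: (C1a) $\#\bot=0$; (C1b) $\forall x:\ \#x=0\iff x=\bot$; (C3) $\forall x:\ \#(x^{\smile})=\#x$; (C4a) $\forall x,y:\ \#x+\#y=\#(x\sqcup y)+\#(x\sqcap y)$; (C4b) $\forall x,y:\ x\sqsubseteq y\implies \#x\le\#y$; (C5a) $\forall x,y,z$ with $x$ univalent: $\#(x^{\smile}y\sqcap z)\le\#(xz\sqcap y)$; (C5b) $\forall x,y,z$ with $x$ univalent: $\#(x\sqcap yz^{\smile})\le\#(xz\sqcap y)$; (C5c) $\forall x,y$ with $x$ univalent: $\#(yx)\le\#y$; (C5d) $\forall x,y$ with $x$ univalent: $\#(x\sqcap y\top)\le\#y$; (C5e) $\forall x,y$ with $x$ univalent: $\#(x\sqcap yy^{\smile})\le\#y$; (C6a) $\forall x:\ \#(1\sqcap xx^{\smile})\le\#x$; (C6b) $\forall x:\ \#(1\sqcap x^{\smile}x)\le\#x$; (C7a) $\forall x:\ \#x=\#\top\iff x=\top$; (C7b) $\forall x:\ \#\top\le\#x\iff x=\top$. Then: 1. (C1b) implies (C1a). 2. (C3) and (C5c) together imply (C5a). 3. Each of (C5b) and (C5e) implies (C6a). 4. If (C3) holds, then (C6a) $\iff$ (C6b). 5. If (C3) and (C4b) hold, then (C5a) $\iff$ (C5c). 6. If (C4b) holds, then (C5b) $\iff$ (C5d), and (C5d) implies (C5e). 7. If (C4b) and (C5c) hold, then (C5b), (C5d), (C5e) and (C6a)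 are pairwise equivalent. 8. If (C4b) holds, then $\#x\le\#\top$ for every $x\in S$; in particular (C7a) $\iff$ (C7b). 9. If (C5b) and (C5c) hold, then $\#(xy)=\#x$ for every univalent $x$ and every mapping $y$. 10. If (C3), (C5b) and (C5c) hold, then $\#x=\#1$ for every point $x$. 11. If (C1a) and (C4a) hold, then $\#(x\sqcup y)=\#x+\#y$ whenever $x\sqcap y=\bot$. 12. If (C1a) and (C4a) hold and $X\subseteq S$ is finite and non-empty with $x\sqcap y=\bot$ for all distinct $x,y\in X$, then $\#\bigsqcup X=\sum_{x\in X}\#x$. 13. If (C1a) and (C4a) hold and $X\subseteq S$ is a finite non-empty set of atoms, then $\#\bigsqcup X=\sum_{x\in X}\#x$.
   Context: A Stone relation algebra is a structure $(S,\sqcup,\sqcap,\cdot,\overline{\,\cdot\,},{}^{\smile},\bot,\top,1)$ (write $xy$ for $x\cdot y$, $\overline{x}$ for the pseudocomplement, $x^{\smile}$ for the converse) such that: $(S,\sqcup,\sqcap,\bot,\top)$ is a bounded distributive lattice with order $x\sqsubseteq y\iff x\sqcup y=y$; $x\sqcap y=\bot\iff x\sqsubseteq\overline{y}$; $\overline{x}\sqcup\overline{\overline{x}}=\top$; $\cdot$ is associative with two-sided unit $1$, distributes over $\sqcup$ on both sides, and $\bot$ is a zero of $\cdot$; $x^{\smile\smile}=x$, $(xy)^{\smile}=y^{\smile}x^{\smile}$, $(x\sqcup y)^{\smile}=x^{\smile}\sqcup y^{\smile}$; $\overline{\overline{1}}=1$; $\overline{\overline{xy}}=\overline{\overline{x}}\,\overline{\overline{y}}$;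 $xy\sqcap z\sqsubseteq x(y\sqcap x^{\smile}z)$. $\bigsqcup X$ denotes the join of a finite non-empty set $X$. $x$ is univalent if $x^{\smile}x\sqsubseteq1$, total if $1\sqsubseteq xx^{\smile}$, a mapping if univalent and total, injective if $xx^{\smile}\sqsubseteq1$, surjective if $1\sqsubseteq x^{\smile}x$, a vector if $x\top=x$, a point if it is an injective, surjective vector. An atom is an element $x\neq\bot$ such that $\bot\neq y\sqsubseteq x$ implies $y=x$. Arithmetic in $\mathbb{N}\cup\{\infty\}$ is the usual one with $n+\infty=\infty+n=\infty$, $n\le\infty$. *)

theory Defs
  imports Main "HOL-Library.Extended_Nat"
begin

class stone_relation_algebra = bounded_lattice + distrib_lattice + uminus + monoid_mult +
  fixes conv :: "'a \<Rightarrow> 'a"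
  assumes sra_pseudo_complement: "inf x y = bot \<longleftrightarrow> x \<le> - y"
    and sra_stone: "sup (- x) (-(-x)) = top"
    and sra_mult_sup_right: "x * sup y z = sup (x * y) (x * z)"
    and sra_mult_sup_left: "sup x y * z = sup (x * z) (y * z)"
    and sra_mult_bot_left: "bot * x = bot"
    and sra_mult_bot_right: "x * bot = bot"
    and sra_conv_invol: "conv (conv x) = x"
    and sra_conv_mult: "conv (x * y) = conv y * conv x"
    and sra_conv_sup: "conv (sup x y) = sup (conv x) (conv y)"
    and sra_pp_one: "-(-1) = 1"
    and sra_pp_mult: "-(-(x * y)) = (-(-x)) * (-(-y))"
    and sra_dedekind: "inf (x * y) z \<le> x * inf y (conv x * z)"

definition univalent :: "'a::stone_relation_algebra \<Rightarrow> bool" where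
  "univalent x \<longleftrightarrow> conv x * x \<le> 1"
definition total :: "'a::stone_relation_algebra \<Rightarrow> bool" where
  "total x \<longleftrightarrow> 1 \<le> x * conv x"
definition mapping :: "'a::stone_relation_algebra \<Rightarrow> bool" where
  "mapping x \<longleftrightarrow> univalent x \<and> total x"
definition injective :: "'a::stone_relation_algebra \<Rightarrow> bool" where
  "injective x \<longleftrightarrow> x * conv x \<le> 1"
definition surjective :: "'a::stone_relation_algebra \<Rightarrow> bool" where
  "surjective x \<longleftrightarrow> 1 \<le> conv x * x"
definition vector :: "'a::stone_relation_algebra \<Rightarrow> bool" where
  "vector x \<longleftrightarrow> x * top = x"
definition point :: "'a::stone_relation_algebra \<Rightarrow> bool" where
  "point x \<longleftrightarrow> injective x \<and> surjective x \<and> vector x"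
definition atom :: "'a::stone_relation_algebra \<Rightarrow> bool" where
  "atom x \<longleftrightarrow> x \<noteq> bot \<and> (\<forall>y. y \<noteq> bot \<and> y \<le> x \<longrightarrow> y = x)"

definition C1a :: "('a::stone_relation_algebra \<Rightarrow> enat) \<Rightarrow> bool" where
  "C1a cnt \<longleftrightarrow> cnt bot = 0"
definition C1b :: "('a::stone_relation_algebra \<Rightarrow> enat) \<Rightarrow> bool" where
  "C1b cnt \<longleftrightarrow> (\<forall>x. cnt x = 0 \<longleftrightarrow> x = bot)"
definition C3 :: "('a::stone_relation_algebra \<Rightarrow> enat) \<Rightarrow> bool" where
  "C3 cnt \<longleftrightarrow> (\<forall>x. cnt (conv x) = cnt x)"
definition C4a :: "('a::stone_relation_algebra \<Rightarrow> enat) \<Rightarrow> bool" where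
  "C4a cnt \<longleftrightarrow> (\<forall>x y. cnt x + cnt y = cnt (sup x y) + cnt (inf x y))"
definition C4b :: "('a::stone_relation_algebra \<Rightarrow> enat) \<Rightarrow> bool" where
  "C4b cnt \<longleftrightarrow> (\<forall>x y. x \<le> y \<longrightarrow> cnt x \<le> cnt y)"
definition C5a :: "('a::stone_relation_algebra \<Rightarrow> enat) \<Rightarrow> bool" where
  "C5a cnt \<longleftrightarrow> (\<forall>x y z. univalent x \<longrightarrow> cnt (inf (conv x * y) z) \<le> cnt (inf (x * z) y))"
definition C5b :: "('a::stone_relation_algebra \<Rightarrow> enat) \<Rightarrow> bool" where
  "C5b cnt \<longleftrightarrow> (\<forall>x y z. univalent x \<longrightarrow> cnt (inf x (y * conv z)) \<le> cnt (inf (x * z) y))"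
definition C5c :: "('a::stone_relation_algebra \<Rightarrow> enat) \<Rightarrow> bool" where
  "C5c cnt \<longleftrightarrow> (\<forall>x y. univalent x \<longrightarrow> cnt (y * x) \<le> cnt y)"
definition C5d :: "('a::stone_relation_algebra \<Rightarrow> enat) \<Rightarrow> bool" where
  "C5d cnt \<longleftrightarrow> (\<forall>x y. univalent x \<longrightarrow> cnt (inf x (y * top)) \<le> cnt y)"
definition C5e :: "('a::stone_relation_algebra \<Rightarrow> enat) \<Rightarrow> bool" where
  "C5e cnt \<longleftrightarrow> (\<forall>x y. univalent x \<longrightarrow> cnt (inf x (y * conv y)) \<le> cnt y)"
definition C6a :: "('a::stone_relation_algebra \<Rightarrow> enat) \<Rightarrow> bool" where
  "C6a cnt \<longleftrightarrow> (\<forall>x. cnt (inf 1 (x * conv x)) \<le> cnt x)"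
definition C6b :: "('a::stone_relation_algebra \<Rightarrow> enat) \<Rightarrow> bool" where
  "C6b cnt \<longleftrightarrow> (\<forall>x. cnt (inf 1 (conv x * x)) \<le> cnt x)"
definition C7a :: "('a::stone_relation_algebra \<Rightarrow> enat) \<Rightarrow> bool" where
  "C7a cnt \<longleftrightarrow> (\<forall>x. cnt x = cnt top \<longleftrightarrow> x = top)"
definition C7b :: "('a::stone_relation_algebra \<Rightarrow> enat) \<Rightarrow> bool" where
  "C7b cnt \<longleftrightarrow> (\<forall>x. cnt top \<le> cnt x \<longleftrightarrow> x = top)"

end

theory Submission
  imports Defs
begin

context stone_relation_algebra
begin

lemma mr: "y \<le> z \<Longrightarrow> x * y \<le> x * z"
  by (metis le_iff_sup sra_mult_sup_right)

lemma ml: "y \<le> z \<Longrightarrow> y * x \<le> z * x"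
  by (metis le_iff_sup sra_mult_sup_left)

lemma cm: "x \<le> y \<Longrightarrow> conv x \<le> conv y"
  by (metis le_iff_sup sra_conv_sup)

lemma conv_top: "conv top = top"
  by (metis cm sra_conv_invol top.extremum top.extremum_uniqueI)

lemma conv_one: "conv 1 = 1"
  by (metis mult_1_left mult_1_right sra_conv_invol sra_conv_mult)

lemma conv_inf: "conv (inf x y) = inf (conv x) (conv y)"
proof (rule order.antisym)
  show "conv (inf x y) \<le> inf (conv x) (conv y)" by (simp add: cm)
  have "conv (inf (conv x) (conv y)) \<le> inf x y"
    by (metis cm inf_le1 inf_le2 le_inf_iff sra_conv_invol)
  then show "inf (conv x) (conv y) \<le> conv (inf x y)"
    by (metis cm sra_conv_invol)
qed

lemma ded2: "inf (x * y) z \<le> inf x (z * conv y) * y"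
proof -
  have "conv (inf (x * y) z) \<le> conv y * inf (conv x) (conv (conv y) * conv z)"
    by (metis conv_inf sra_conv_mult sra_dedekind)
  then have "conv (conv (inf (x * y) z)) \<le> conv (conv y * inf (conv x) (y * conv z))"
    using cm sra_conv_invol by metis
  then show ?thesis
    by (simp add: sra_conv_invol sra_conv_mult conv_inf)
qed

end

lemma univ_one: "univalent (1::'a::stone_relation_algebra)"
  by (simp add: univalent_def conv_one)

lemma vec_inf:
  fixes x y :: "'a::stone_relation_algebra"
  shows "inf x (y * top) \<le> inf 1 (y * top) * x"
proof -
  have "inf (1 * x) (y * top) \<le> inf 1 (y * top * conv x) * x" by (rule ded2)
  moreover have "inf 1 (y * top * conv x) \<le> inf 1 (y * top)"
    by (simp add: le_infI2 mr mult.assoc)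
  ultimately show ?thesis
    by (metis ml mult_1_left order_trans)
qed

lemma one_vec:
  fixes y :: "'a::stone_relation_algebra"
  shows "inf 1 (y * top) \<le> inf 1 (y * conv y)"
proof -
  have "inf (y * top) 1 \<le> y * inf top (conv y * 1)" by (rule sra_dedekind)
  then show ?thesis by (simp add: inf_commute)
qed

lemma sup_fin_disj:
  fixes x :: "'a::stone_relation_algebra"
  assumes "finite F" "F \<noteq> {}" "\<forall>y\<in>F. inf x y = bot"
  shows "inf x (Sup_fin F) = bot"
  using assms
proof (induction F rule: finite_ne_induct)
  case (singleton y) then show ?case by simp
next
  case (insert y F) then show ?case by (simp add: inf_sup_distrib1)
qed

lemma sum_disj:
  fixes cnt :: "'a::stone_relation_algebra \<Rightarrow> enat"
  assumes "C1a cnt" "C4a cnt"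
  shows "finite X \<Longrightarrow> X \<noteq> {} \<Longrightarrow> (\<forall>x\<in>X. \<forall>y\<in>X. x \<noteq> y \<longrightarrow> inf x y = bot)
        \<Longrightarrow> cnt (Sup_fin X) = (\<Sum>x\<in>X. cnt x)"
proof (induction X rule: finite_ne_induct)
  case (singleton x) then show ?case by simp
next
  case (insert x F)
  have d: "inf x (Sup_fin F) = bot"
    using insert by (intro sup_fin_disj) auto
  have "cnt x + cnt (Sup_fin F) = cnt (sup x (Sup_fin F)) + cnt bot"
    using assms(2) d unfolding C4a_def by metis
  then have "cnt (Sup_fin (insert x F)) = cnt x + cnt (Sup_fin F)"
    using assms(1) insert by (simp add: C1a_def)
  also have "\<dots> = (\<Sum>x\<in>insert x F. cnt x)"
    using insert by simp
  finally show ?case .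
qed

theorem mainTheorem3:
  fixes cnt :: "'a::stone_relation_algebra \<Rightarrow> enat"
  shows
   "(C1b cnt \<longrightarrow> C1a cnt)
  \<and> (C3 cnt \<and> C5c cnt \<longrightarrow> C5a cnt)
  \<and> (C5b cnt \<longrightarrow> C6a cnt) \<and> (C5e cnt \<longrightarrow> C6a cnt)
  \<and> (C3 cnt \<longrightarrow> (C6a cnt \<longleftrightarrow> C6b cnt))
  \<and> (C3 cnt \<and> C4b cnt \<longrightarrow> (C5a cnt \<longleftrightarrow> C5c cnt))
  \<and> (C4b cnt \<longrightarrow> (C5b cnt \<longleftrightarrow> C5d cnt) \<and> (C5d cnt \<longrightarrow> C5e cnt))
  \<and> (C4b cnt \<and> C5c cnt \<longrightarrow>
       (C5b cnt \<longleftrightarrow> C5d cnt) \<and> (C5b cnt \<longleftrightarrow> C5e cnt) \<and> (C5b cnt \<longleftrightarrow> C6a cnt)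
     \<and> (C5d cnt \<longleftrightarrow> C5e cnt) \<and> (C5d cnt \<longleftrightarrow> C6a cnt) \<and> (C5e cnt \<longleftrightarrow> C6a cnt))
  \<and> (C4b cnt \<longrightarrow> (\<forall>x. cnt x \<le> cnt top) \<and> (C7a cnt \<longleftrightarrow> C7b cnt))
  \<and> (C5b cnt \<and> C5c cnt \<longrightarrow> (\<forall>x y. univalent x \<and> mapping y \<longrightarrow> cnt (x * y) = cnt x))
  \<and> (C3 cnt \<and> C5b cnt \<and> C5c cnt \<longrightarrow> (\<forall>x. point x \<longrightarrow> cnt x = cnt 1))
  \<and> (C1a cnt \<and> C4a cnt \<longrightarrow> (\<forall>x y. inf x y = bot \<longrightarrow> cnt (sup x y) = cnt x + cnt y))
  \<and> (C1a cnt \<and> C4a cnt \<longrightarrow> (\<forall>X. finite X \<and> X \<noteq> {}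
        \<and> (\<forall>x\<in>X. \<forall>y\<in>X. x \<noteq> y \<longrightarrow> inf x y = bot)
        \<longrightarrow> cnt (Sup_fin X) = (\<Sum>x\<in>X. cnt x)))
  \<and> (C1a cnt \<and> C4a cnt \<longrightarrow> (\<forall>X. finite X \<and> X \<noteq> {} \<and> (\<forall>x\<in>X. atom x)
        \<longrightarrow> cnt (Sup_fin X) = (\<Sum>x\<in>X. cnt x)))"
proof -
  have p1: "C1b cnt \<longrightarrow> C1a cnt" by (simp add: C1b_def C1a_def)
  have p2: "C3 cnt \<and> C5c cnt \<longrightarrow> C5a cnt"
  proof (intro impI, unfold C5a_def, intro allI impI)
    fix x y z :: 'a
    assume h: "C3 cnt \<and> C5c cnt" and u: "univalent x"
    have eq: "inf (conv x * y) z = conv x * inf y (x * z)"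
    proof (rule order.antisym)
      show "inf (conv x * y) z \<le> conv x * inf y (x * z)"
        using sra_dedekind[of "conv x" y z] by (simp add: sra_conv_invol)
      have "conv x * inf y (x * z) \<le> conv x * (x * z)" by (simp add: mr)
      also have "\<dots> \<le> z"
      proof -
        have "conv x * x * z \<le> 1 * z" using u ml unfolding univalent_def by blast
        then show ?thesis by (simp add: mult.assoc)
      qed
      finally show "conv x * inf y (x * z) \<le> inf (conv x * y) z"
        by (simp add: mr)
    qed
    have "cnt (conv x * inf y (x * z)) = cnt (conv (inf y (x * z)) * x)"
    proof -
      have "cnt (conv x * inf y (x * z)) = cnt (conv (conv x * inf y (x * z)))"
        using h unfolding C3_def by simp
      then show ?thesis by (simp add: sra_conv_mult sra_conv_invol)
    qed
    also have "\<dots> \<le> cnt (conv (inf y (x * z)))"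
      using h u unfolding C5c_def by blast
    also have "\<dots> = cnt (inf (x * z) y)"
      using h unfolding C3_def by (simp add: inf_commute)
    finally show "cnt (inf (conv x * y) z) \<le> cnt (inf (x * z) y)" using eq by simp
  qed
  have p3a: "C5b cnt \<longrightarrow> C6a cnt"
    unfolding C5b_def C6a_def
  proof
    assume "\<forall>x y z. univalent x \<longrightarrow> cnt (inf x (y * conv z)) \<le> cnt (inf (x * z) y)"
    then have "\<And>x::'a. cnt (inf 1 (x * conv x)) \<le> cnt (inf (1 * x) x)" using univ_one by blast
    then show "\<forall>x::'a. cnt (inf 1 (x * conv x)) \<le> cnt x" by simp
  qed
  have p3b: "C5e cnt \<longrightarrow> C6a cnt"
    unfolding C5e_def C6a_def using univ_one by blast
  have p4: "C3 cnt \<longrightarrow> (C6a cnt \<longleftrightarrow> C6b cnt)"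
  proof (intro impI iffI)
    assume c: "C3 cnt" and a: "C6a cnt"
    show "C6b cnt" unfolding C6b_def
    proof
      fix x :: 'a
      have "cnt (inf 1 (conv x * conv (conv x))) \<le> cnt (conv x)" using a unfolding C6a_def by blast
      then show "cnt (inf 1 (conv x * x)) \<le> cnt x" using c unfolding C3_def by (simp add: sra_conv_invol)
    qed
  next
    assume c: "C3 cnt" and a: "C6b cnt"
    show "C6a cnt" unfolding C6a_def
    proof
      fix x :: 'a
      have "cnt (inf 1 (conv (conv x) * conv x)) \<le> cnt (conv x)" using a unfolding C6b_def by blast
      then show "cnt (inf 1 (x * conv x)) \<le> cnt x" using c unfolding C3_def by (simp add: sra_conv_invol)
    qed
  qed
  have p5: "C3 cnt \<and> C4b cnt \<longrightarrow> (C5a cnt \<longleftrightarrow> C5c cnt)"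
  proof (intro impI iffI)
    assume h: "C3 cnt \<and> C4b cnt" and a: "C5a cnt"
    show "C5c cnt" unfolding C5c_def
    proof (intro allI impI)
      fix x y :: 'a assume u: "univalent x"
      have "cnt (y * x) = cnt (inf (conv x * conv y) top)"
      proof -
        have "cnt (y * x) = cnt (conv (y * x))" using h unfolding C3_def by simp
        then show ?thesis by (simp add: sra_conv_mult)
      qed
      also have "\<dots> \<le> cnt (inf (x * top) (conv y))"
        using a u unfolding C5a_def by blast
      also have "\<dots> \<le> cnt (conv y)"
        using h unfolding C4b_def by simp
      also have "\<dots> = cnt y" using h unfolding C3_def by simp
      finally show "cnt (y * x) \<le> cnt y" .
    qed
  next
    assume "C3 cnt \<and> C4b cnt" "C5c cnt" then show "C5a cnt" using p2 by blast
  qed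
  have bd: "C4b cnt \<longrightarrow> C5b cnt \<longrightarrow> C5d cnt"
  proof (intro impI, unfold C5d_def, intro allI impI)
    fix x y :: 'a assume h: "C4b cnt" "C5b cnt" and u: "univalent x"
    have "cnt (inf x (y * conv top)) \<le> cnt (inf (x * top) y)"
      using h u unfolding C5b_def by blast
    also have "\<dots> \<le> cnt y" using h unfolding C4b_def by simp
    finally show "cnt (inf x (y * top)) \<le> cnt y" by (simp add: conv_top)
  qed
  have db: "C4b cnt \<longrightarrow> C5d cnt \<longrightarrow> C5b cnt"
  proof (intro impI, unfold C5b_def, intro allI impI)
    fix x y z :: 'a assume h: "C4b cnt" "C5d cnt" and u: "univalent x"
    have "inf (y * conv z) x \<le> inf y (x * conv (conv z)) * conv z" by (rule ded2)
    also have "\<dots> \<le> inf (x * z) y * top"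
      using mr[OF top_greatest, of "inf y (x * z)" "conv z"] by (simp add: inf_commute sra_conv_invol)
    finally have "inf x (y * conv z) \<le> inf x (inf (x * z) y * top)"
      by (simp add: inf_commute)
    then have "cnt (inf x (y * conv z)) \<le> cnt (inf x (inf (x * z) y * top))"
      using h unfolding C4b_def by blast
    also have "\<dots> \<le> cnt (inf (x * z) y)"
      using h u unfolding C5d_def by blast
    finally show "cnt (inf x (y * conv z)) \<le> cnt (inf (x * z) y)" .
  qed
  have de: "C4b cnt \<longrightarrow> C5d cnt \<longrightarrow> C5e cnt"
  proof (intro impI, unfold C5e_def, intro allI impI)
    fix x y :: 'a assume h: "C4b cnt" "C5d cnt" and u: "univalent x"
    have "inf x (y * conv y) \<le> inf x (y * top)" by (simp add: le_infI2 mr)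
    then have "cnt (inf x (y * conv y)) \<le> cnt (inf x (y * top))"
      using h unfolding C4b_def by blast
    also have "\<dots> \<le> cnt y" using h u unfolding C5d_def by blast
    finally show "cnt (inf x (y * conv y)) \<le> cnt y" .
  qed
  have p6: "C4b cnt \<longrightarrow> (C5b cnt \<longleftrightarrow> C5d cnt) \<and> (C5d cnt \<longrightarrow> C5e cnt)"
    using bd db de by blast
  have ad: "C4b cnt \<and> C5c cnt \<longrightarrow> C6a cnt \<longrightarrow> C5d cnt"
  proof (intro impI, unfold C5d_def, intro allI impI)
    fix x y :: 'a assume h: "C4b cnt \<and> C5c cnt" "C6a cnt" and u: "univalent x"
    have "cnt (inf x (y * top)) \<le> cnt (inf 1 (y * top) * x)"
      using h vec_inf unfolding C4b_def by blast
    also have "\<dots> \<le> cnt (inf 1 (y * top))"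
      using h u unfolding C5c_def by blast
    also have "\<dots> \<le> cnt (inf 1 (y * conv y))"
      using h one_vec unfolding C4b_def by blast
    also have "\<dots> \<le> cnt y" using h unfolding C6a_def by blast
    finally show "cnt (inf x (y * top)) \<le> cnt y" .
  qed
  have p7: "C4b cnt \<and> C5c cnt \<longrightarrow>
       (C5b cnt \<longleftrightarrow> C5d cnt) \<and> (C5b cnt \<longleftrightarrow> C5e cnt) \<and> (C5b cnt \<longleftrightarrow> C6a cnt)
     \<and> (C5d cnt \<longleftrightarrow> C5e cnt) \<and> (C5d cnt \<longleftrightarrow> C6a cnt) \<and> (C5e cnt \<longleftrightarrow> C6a cnt)"
    using bd db de ad p3b by (meson)
  have p8: "C4b cnt \<longrightarrow> (\<forall>x. cnt x \<le> cnt top) \<and> (C7a cnt \<longleftrightarrow> C7b cnt)"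
  proof (intro impI)
    assume h: "C4b cnt"
    then have t: "\<forall>x. cnt x \<le> cnt top" unfolding C4b_def by simp
    then have "\<forall>x. (cnt top \<le> cnt x) = (cnt x = cnt top)" using antisym by fastforce
    then show "(\<forall>x. cnt x \<le> cnt top) \<and> (C7a cnt \<longleftrightarrow> C7b cnt)"
      using t unfolding C7a_def C7b_def by simp
  qed
  have p9: "C5b cnt \<and> C5c cnt \<longrightarrow> (\<forall>x y. univalent x \<and> mapping y \<longrightarrow> cnt (x * y) = cnt x)"
  proof (intro impI allI)
    fix x y :: 'a assume h: "C5b cnt \<and> C5c cnt" and m: "univalent x \<and> mapping y"
    have le1: "cnt (x * y) \<le> cnt x" using h m unfolding C5c_def mapping_def by blast
    have "x \<le> x * y * conv y" using m unfolding mapping_def total_def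
    proof -
      have "x * 1 \<le> x * (y * conv y)" using m mr unfolding mapping_def total_def by blast
      then show ?thesis by (simp add: mult.assoc)
    qed
    then have "inf x (x * y * conv y) = x" by (simp add: inf_absorb1)
    moreover have "cnt (inf x (x * y * conv y)) \<le> cnt (inf (x * y) (x * y))"
      using h m unfolding C5b_def by blast
    ultimately have "cnt x \<le> cnt (x * y)" by simp
    then show "cnt (x * y) = cnt x" using le1 by simp
  qed
  have p10: "C3 cnt \<and> C5b cnt \<and> C5c cnt \<longrightarrow> (\<forall>x. point x \<longrightarrow> cnt x = cnt 1)"
  proof (intro impI allI)
    fix x :: 'a assume h: "C3 cnt \<and> C5b cnt \<and> C5c cnt" and p: "point x"
    have "mapping (conv x)" using p
      unfolding point_def mapping_def univalent_def total_def injective_def surjective_def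
      by (simp add: sra_conv_invol)
    then have "cnt (1 * conv x) = cnt 1" using p9 h univ_one by blast
    then show "cnt x = cnt 1" using h unfolding C3_def by simp
  qed
  have p11: "C1a cnt \<and> C4a cnt \<longrightarrow> (\<forall>x y. inf x y = bot \<longrightarrow> cnt (sup x y) = cnt x + cnt y)"
  proof (intro impI allI)
    fix x y :: 'a assume h: "C1a cnt \<and> C4a cnt" and d: "inf x y = bot"
    have "cnt x + cnt y = cnt (sup x y) + cnt (inf x y)" using h unfolding C4a_def by blast
    then show "cnt (sup x y) = cnt x + cnt y" using h d unfolding C1a_def by simp
  qed
  have p12: "C1a cnt \<and> C4a cnt \<longrightarrow> (\<forall>X. finite X \<and> X \<noteq> {}
        \<and> (\<forall>x\<in>X. \<forall>y\<in>X. x \<noteq> y \<longrightarrow> inf x y = bot)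
        \<longrightarrow> cnt (Sup_fin X) = (\<Sum>x\<in>X. cnt x))"
  proof (intro impI allI)
    fix X :: "'a set"
    assume h: "C1a cnt \<and> C4a cnt"
      and x: "finite X \<and> X \<noteq> {} \<and> (\<forall>x\<in>X. \<forall>y\<in>X. x \<noteq> y \<longrightarrow> inf x y = bot)"
    show "cnt (Sup_fin X) = (\<Sum>x\<in>X. cnt x)"
      using sum_disj[of cnt X] h x by simp
  qed
  have at: "\<And>x y::'a. atom x \<Longrightarrow> atom y \<Longrightarrow> x \<noteq> y \<Longrightarrow> inf x y = bot"
  proof (rule ccontr)
    fix x y :: 'a assume a: "atom x" "atom y" "x \<noteq> y" "inf x y \<noteq> bot"
    have "inf x y = x" using a(1,4) unfolding atom_def by simp
    moreover have "inf x y = y" using a(2,4) unfolding atom_def by simp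
    ultimately show False using a(3) by simp
  qed
  have p13: "C1a cnt \<and> C4a cnt \<longrightarrow> (\<forall>X. finite X \<and> X \<noteq> {} \<and> (\<forall>x\<in>X. atom x)
        \<longrightarrow> cnt (Sup_fin X) = (\<Sum>x\<in>X. cnt x))"
  proof (intro impI allI)
    fix X :: "'a set"
    assume h: "C1a cnt \<and> C4a cnt"
      and x: "finite X \<and> X \<noteq> {} \<and> (\<forall>x\<in>X. atom x)"
    then have "\<forall>x\<in>X. \<forall>y\<in>X. x \<noteq> y \<longrightarrow> inf x y = bot" using at by simp
    then show "cnt (Sup_fin X) = (\<Sum>x\<in>X. cnt x)"
      using p12 h x by simp
  qed
  show ?thesis
    by (intro conjI; (fact p1 | fact p2 | fact p3a | fact p3b | fact p4 | fact p5 | fact p6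
      | fact p7 | fact p8 | fact p9 | fact p10 | fact p11 | fact p12 | fact p13))
qed

end
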